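(* Let $u>0$, $\Delta t,\Delta x>0$ with $\nu=u\Delta t/\Delta x\in(0,1]$. Let $a,b\in\mathbb R$, $x_0\in\mathbb R$, and let $c^{\rm ini}(x)=a$ for $x<x_0$ and $c^{\rm ini}(x)=b$ for $x>x_0$. Set $c_j^0=\frac1{\Delta x}\int_{(j-1/2)\Delta x}^{(j+1/2)\Delta x}c^{\rm ini}(x)\,dx$ and, for $n\ge0$, $c_j^{n+1}=c_j^n-\nu(c_{j+1/2}^n-c_{j-1/2}^n)$, where $c^n_{j+1/2}=\min(\max(\omega_{j+1/2},c_{j+1}^n),\Omega_{j+1/2})$ is the limited downwind flux computed from $(c^n_j)_j$. Then for all $n\ge0$ and $j\in\mathbb Z$, $$c_j^n=\frac1{\Delta x}\int_{(j-1/2)\Delta x}^{(j+1/2)\Delta x}c^{\rm ini}(x-un\Delta t)\,dx,$$ i.e. the scheme computes exactly the cell averages of the exact solution $c(t,x)=c^{\rm ini}(x-ut)$.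
   Context: Limited downwind flux: given $(c_j^n)_j$, let $m_{j+1/2}=\min(c_j^n,c_{j+1}^n)$, $M_{j+1/2}=\max(c_j^n,c_{j+1}^n)$, $\lambda_{j+1/2}=\frac1\nu(c_j^n-M_{j-1/2})+M_{j-1/2}$, $\Lambda_{j+1/2}=\frac1\nu(c_j^n-m_{j-1/2})+m_{j-1/2}$, and $[\omega_{j+1/2},\Omega_{j+1/2}]=[\lambda_{j+1/2},\Lambda_{j+1/2}]\cap[m_{j+1/2},M_{j+1/2}]$ (nonempty since it contains $c_j^n$ when $0<\nu\le1$). *)

theory Defs
  imports "HOL-Analysis.Analysis"
begin

text \<open>A grid function c :: int \<Rightarrow> real represents (c_j)_j. Interface index j+1/2 is
encoded by the integer j.\<close>

definition lo_if :: "(int \<Rightarrow> real) \<Rightarrow> int \<Rightarrow> real" where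
  "lo_if c j = min (c j) (c (j + 1))"

definition hi_if :: "(int \<Rightarrow> real) \<Rightarrow> int \<Rightarrow> real" where
  "hi_if c j = max (c j) (c (j + 1))"

definition lam_if :: "real \<Rightarrow> (int \<Rightarrow> real) \<Rightarrow> int \<Rightarrow> real" where
  "lam_if \<nu> c j = (1 / \<nu>) * (c j - hi_if c (j - 1)) + hi_if c (j - 1)"

definition Lam_if :: "real \<Rightarrow> (int \<Rightarrow> real) \<Rightarrow> int \<Rightarrow> real" where
  "Lam_if \<nu> c j = (1 / \<nu>) * (c j - lo_if c (j - 1)) + lo_if c (j - 1)"

definition omega_if :: "real \<Rightarrow> (int \<Rightarrow> real) \<Rightarrow> int \<Rightarrow> real" where
  "omega_if \<nu> c j = max (lam_if \<nu> c j) (lo_if c j)"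

definition Omega_if :: "real \<Rightarrow> (int \<Rightarrow> real) \<Rightarrow> int \<Rightarrow> real" where
  "Omega_if \<nu> c j = min (Lam_if \<nu> c j) (hi_if c j)"

definition ld_flux :: "real \<Rightarrow> (int \<Rightarrow> real) \<Rightarrow> int \<Rightarrow> real" where
  "ld_flux \<nu> c j = min (max (omega_if \<nu> c j) (c (j + 1))) (Omega_if \<nu> c j)"

definition ld_step :: "real \<Rightarrow> (int \<Rightarrow> real) \<Rightarrow> int \<Rightarrow> real" where
  "ld_step \<nu> c j = c j - \<nu> * (ld_flux \<nu> c j - ld_flux \<nu> c (j - 1))"

definition cell_avg :: "real \<Rightarrow> (real \<Rightarrow> real) \<Rightarrow> int \<Rightarrow> real" where
  "cell_avg dx f j = (1 / dx) * integral {(real_of_int j - 1/2) * dx .. (real_of_int j + 1/2) * dx} f"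

end

theory Submission imports Defs begin

definition phi :: "real \<Rightarrow> real" where "phi t = min 1 (max 0 t)"
definition psi :: "real \<Rightarrow> real \<Rightarrow> real" where "psi v t = phi ((t - 1 + v) / v)"

definition FF :: "real \<Rightarrow> real \<Rightarrow> real \<Rightarrow> real \<Rightarrow> real" where
 "FF v x y z = min (max (max ((1/v)*(y - max x y) + max x y) (min y z)) z)
      (min ((1/v)*(y - min x y) + min x y) (max y z))"

lemma flux_FF: "ld_flux v c j = FF v (c (j-1)) (c j) (c (j+1))"
  by (simp add: ld_flux_def FF_def omega_if_def Omega_if_def lam_if_def Lam_if_def lo_if_def hi_if_def)

lemma phi_neg: "t \<le> 0 \<Longrightarrow> phi t = 0" and phi_one: "1 \<le> t \<Longrightarrow> phi t = 1"
  and phi_mid: "0 \<le> t \<Longrightarrow> t \<le> 1 \<Longrightarrow> phi t = t" and phi_rng: "0 \<le> phi t" "phi t \<le> 1"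
  by (auto simp: phi_def)

lemma FF_D:
  assumes v: "0 < v" "v \<le> 1"
  shows "FF v (phi (t+1)) (phi t) (phi (t-1)) = psi v t"
proof -
  have w: "1/v \<ge> 1" using v by simp
  consider "t \<le> 0" | "0 \<le> t" "t \<le> 1" | "1 \<le> t" by linarith
  then show ?thesis
  proof cases
    case 1
    have a: "(t - 1 + v)/v \<le> 0" using 1 v by (simp add: divide_le_0_iff)
    have p0: "phi t = 0" "phi (t-1) = 0" using 1 by (auto intro: phi_neg)
    have X: "0 \<le> phi (t+1)" by (rule phi_rng)
    have m1: "max (phi (t+1)) 0 = phi (t+1)" "min (phi (t+1)) 0 = 0" using X by auto
    have "FF v (phi (t+1)) (phi t) (phi (t-1)) = 0" unfolding FF_def p0 m1 by simp
    moreover have "psi v t = 0" unfolding psi_def using a by (rule phi_neg)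
    ultimately show ?thesis by simp
  next
    case 2
    have p: "phi (t+1) = 1" "phi t = t" "phi (t-1) = 0" using 2 by (auto intro: phi_one phi_mid phi_neg)
    have e: "(t - 1 + v)/v = (1/v)*(t-1) + 1" using v by (simp add: field_simps)
    have le: "(1/v)*(t-1) \<le> t - 1"
    proof -
      have "(t-1) * (1/v) \<le> (t-1) * 1" using w 2 by (intro mult_left_mono_neg) auto
      thus ?thesis by simp
    qed
    have m: "max 1 t = 1" "min 1 t = t" "min t 0 = 0" "max t 0 = t" using 2 by auto
    have "FF v (phi (t+1)) (phi t) (phi (t-1)) = min (max ((1/v)*(t-1) + 1) 0) t"
      unfolding FF_def p m by (simp add: algebra_simps)
    also have "\<dots> = max ((1/v)*(t-1) + 1) 0" using le 2 by simp
    also have "\<dots> = psi v t" unfolding psi_def e phi_def using le 2 by simp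
    finally show ?thesis .
  next
    case 3
    have p: "phi (t+1) = 1" "phi t = 1" using 3 by (auto intro: phi_one)
    have Z: "phi (t-1) \<le> 1" by (rule phi_rng)
    have a: "(t - 1 + v)/v \<ge> 1" using 3 v by simp
    have "FF v (phi (t+1)) (phi t) (phi (t-1)) = 1" unfolding FF_def p using Z by simp
    moreover have "psi v t = 1" unfolding psi_def using a by (rule phi_one)
    ultimately show ?thesis by simp
  qed
qed

lemma FF_E:
  assumes v: "0 < v" "v \<le> 1"
  shows "FF v (1 - phi (t+1)) (1 - phi t) (1 - phi (t-1)) = 1 - psi v t"
proof -
  have w: "1/v \<ge> 1" using v by simp
  consider "t \<le> 0" | "0 \<le> t" "t \<le> 1" | "1 \<le> t" by linarith
  then show ?thesis
  proof cases
    case 1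
    have a: "(t - 1 + v)/v \<le> 0" using 1 v by (simp add: divide_le_0_iff)
    have p0: "1 - phi t = 1" "1 - phi (t-1) = 1" using 1 by (auto simp: phi_neg)
    define x where "x = 1 - phi (t+1)"
    have X: "0 \<le> x" "x \<le> 1" unfolding x_def using phi_rng[of "t+1"] by auto
    have L: "(1/v)*(1 - x) + x \<ge> 1"
    proof -
      have "(1 - x) * 1 \<le> (1 - x) * (1/v)" using w X by (intro mult_left_mono) auto
      thus ?thesis by (simp add: algebra_simps)
    qed
    have m1: "max x 1 = 1" "min x 1 = x" using X by auto
    have "FF v x (1 - phi t) (1 - phi (t-1)) = 1" unfolding FF_def p0 m1 using L by simp
    moreover have "psi v t = 0" unfolding psi_def using a by (rule phi_neg)
    ultimately show ?thesis unfolding x_def by simp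
  next
    case 2
    have p: "1 - phi (t+1) = 0" "1 - phi t = 1 - t" "1 - phi (t-1) = 1" using 2 by (auto simp: phi_one phi_mid phi_neg)
    have e: "(t - 1 + v)/v = (1/v)*(t-1) + 1" using v by (simp add: field_simps)
    have le: "(1/v)*(t-1) \<le> t - 1"
    proof -
      have "(t-1) * (1/v) \<le> (t-1) * 1" using w 2 by (intro mult_left_mono_neg) auto
      thus ?thesis by simp
    qed
    have m: "max 0 (1-t) = 1-t" "min 0 (1-t) = 0" "min (1-t) 1 = 1-t" "max (1-t) 1 = 1" using 2 by auto
    have "FF v (1 - phi (t+1)) (1 - phi t) (1 - phi (t-1)) = min ((1/v)*(1-t)) 1"
      unfolding FF_def p m using 2 by (simp add: algebra_simps)
    also have "\<dots> = 1 - max ((1/v)*(t-1) + 1) 0"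
    proof -
      have "(1/v)*(1-t) = -((1/v)*(t-1))" by (simp add: diff_divide_distrib)
      moreover have "min (-L) 1 = 1 - max (L + 1) 0" for L :: real by (simp add: min_def max_def)
      ultimately show ?thesis by simp
    qed
    also have "\<dots> = 1 - psi v t" unfolding psi_def e phi_def using le 2 by simp
    finally show ?thesis .
  next
    case 3
    have p: "1 - phi (t+1) = 0" "1 - phi t = 0" using 3 by (auto simp: phi_one)
    have Z: "1 - phi (t-1) \<ge> 0" using phi_rng[of "t-1"] by simp
    have a: "(t - 1 + v)/v \<ge> 1" using 3 v by simp
    have "FF v (1 - phi (t+1)) (1 - phi t) (1 - phi (t-1)) = 0" unfolding FF_def p using Z by simp
    moreover have "psi v t = 1" unfolding psi_def using a by (rule phi_one)
    ultimately show ?thesis by simp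
  qed
qed

lemma step_D:
  assumes v: "0 < v" "v \<le> 1"
  shows "phi t - v * (psi v t - psi v (t+1)) = phi (t + v)"
proof -
  have e1: "(t + 1 - 1 + v)/v = t/v + 1" using v by (simp add: field_simps)
  have e2: "(t - 1 + v)/v = (t-1)/v + 1" using v by (simp add: field_simps)
  consider "t \<le> -v" | "-v \<le> t" "t \<le> 0" | "0 \<le> t" "t \<le> 1 - v" | "1 - v \<le> t" "t \<le> 1" | "1 \<le> t" by linarith
  then show ?thesis
  proof cases
    case 1
    have "t/v \<le> -1" using 1 v by (simp add: divide_le_eq)
    moreover have "(t-1)/v \<le> -1" using 1 v by (simp add: divide_le_eq)
    ultimately show ?thesis using 1 v unfolding psi_def e1 e2 by (simp add: phi_neg)
  next
    case 2
    have "t/v \<le> 0" "t/v \<ge> -1" using 2 v by (auto simp: divide_le_eq le_divide_eq divide_le_0_iff)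
    moreover have "(t-1)/v \<le> -1" using 2 v by (simp add: divide_le_eq)
    moreover have "v * (t/v) = t" using v by simp
    ultimately show ?thesis using 2 v unfolding psi_def e1 e2 by (simp add: phi_neg phi_mid algebra_simps)
  next
    case 3
    have "t/v \<ge> 0" using 3 v by simp
    moreover have "(t-1)/v \<le> -1" using 3 v by (simp add: divide_le_eq)
    ultimately show ?thesis using 3 v unfolding psi_def e1 e2 by (simp add: phi_neg phi_mid phi_one algebra_simps)
  next
    case 4
    have "t/v \<ge> 0" using 4 v by simp
    moreover have "(t-1)/v \<ge> -1" "(t-1)/v \<le> 0" using 4 v by (auto simp: le_divide_eq divide_le_0_iff)
    moreover have "v * ((t-1)/v) = t - 1" using v by simp
    ultimately show ?thesis using 4 v unfolding psi_def e1 e2 by (simp add: phi_neg phi_mid phi_one algebra_simps)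
  next
    case 5
    have "t/v \<ge> 0" "(t-1)/v \<ge> 0" using 5 v by auto
    thus ?thesis using 5 v unfolding psi_def e1 e2 by (simp add: phi_one algebra_simps)
  qed
qed

lemma max_aff: "(\<beta>::real) > 0 \<Longrightarrow> max (\<alpha>+\<beta>*x) (\<alpha>+\<beta>*y) = \<alpha>+\<beta>*max x y"
  by (simp add: max_def)
lemma min_aff: "(\<beta>::real) > 0 \<Longrightarrow> min (\<alpha>+\<beta>*x) (\<alpha>+\<beta>*y) = \<alpha>+\<beta>*min x y"
  by (simp add: min_def)
lemma lam_aff: "w*(((\<alpha>::real)+\<beta>*y) - (\<alpha>+\<beta>*h)) + (\<alpha>+\<beta>*h) = \<alpha> + \<beta>*(w*(y-h)+h)"
  by (simp add: algebra_simps)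

lemma FF_aff: "(\<beta>::real) > 0 \<Longrightarrow> FF v (\<alpha>+\<beta>*x) (\<alpha>+\<beta>*y) (\<alpha>+\<beta>*z) = \<alpha> + \<beta> * FF v x y z"
  unfolding FF_def by (simp only: max_aff min_aff lam_aff)

lemma FF_const: "FF v b b b = b"
  unfolding FF_def by simp

lemma FF_P:
  assumes v: "0 < v" "v \<le> 1"
  shows "FF v (b + (a-b)*phi (t+1)) (b + (a-b)*phi t) (b + (a-b)*phi (t-1)) = b + (a-b)*psi v t"
proof -
  consider "a > b" | "a = b" | "a < b" by linarith
  then show ?thesis
  proof cases
    case 1
    then show ?thesis using FF_aff[of "a-b" v b] FF_D[OF v] by simp
  next
    case 2 then show ?thesis by (simp add: FF_const)
  next
    case 3
    have e: "b + (a-b)*y = a + (b-a)*(1-y)" for y :: real by (simp add: algebra_simps)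
    show ?thesis unfolding e using FF_aff[of "b-a" v a] FF_E[OF v] 3 by simp
  qed
qed

definition P :: "real \<Rightarrow> real \<Rightarrow> real \<Rightarrow> int \<Rightarrow> real" where
  "P a b q j = b + (a-b)*phi (q - real_of_int j + 1/2)"

lemma step_P:
  assumes v: "0 < v" "v \<le> 1"
  shows "ld_step v (P a b q) j = P a b (q + v) j"
proof -
  have fl: "ld_flux v (P a b q) i = b + (a-b)*psi v (q - real_of_int i + 1/2)" for i
  proof -
    define t where "t = q - real_of_int i + 1/2"
    have e1: "q - real_of_int (i-1) + 1/2 = t+1" "q - real_of_int (i+1) + 1/2 = t-1" unfolding t_def by simp_all
    show ?thesis unfolding flux_FF P_def e1 t_def[symmetric] using FF_P[OF v] by simp
  qed
  define t where "t = q - real_of_int j + 1/2"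
  have e1: "q - real_of_int (j-1) + 1/2 = t+1" "q + v - real_of_int j + 1/2 = t + v" unfolding t_def by simp_all
  have "ld_step v (P a b q) j = b + (a - b) * (phi t - v * (psi v t - psi v (t + 1)))"
    unfolding ld_step_def fl unfolding P_def e1 t_def[symmetric] by (simp add: algebra_simps)
  also have "\<dots> = P a b (q + v) j" unfolding step_D[OF v] P_def e1 ..
  finally show ?thesis .
qed

lemma integral_step:
  fixes g :: "real \<Rightarrow> real"
  assumes "l \<le> r" and ga: "\<And>x. x < p \<Longrightarrow> g x = a" and gb: "\<And>x. x > p \<Longrightarrow> g x = b"
  shows "integral {l..r} g = a*(max l (min p r) - l) + b*(r - max l (min p r))"
proof -
  define m where "m = max l (min p r)"
  have lm: "l \<le> m" "m \<le> r" unfolding m_def using assms(1) by auto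
  have h1: "(g has_integral (a*(m-l))) {l..m}"
  proof (rule has_integral_spike_finite[where S="{m}" and f="\<lambda>x. a"])
    show "((\<lambda>x. a) has_integral a*(m-l)) {l..m}" using has_integral_const_real[of a l m] lm by (simp add: mult.commute)
    fix x assume "x \<in> {l..m} - {m}"
    hence "x < p" unfolding m_def by auto
    thus "g x = a" by (rule ga)
  qed simp
  have h2: "(g has_integral (b*(r-m))) {m..r}"
  proof (rule has_integral_spike_finite[where S="{m}" and f="\<lambda>x. b"])
    show "((\<lambda>x. b) has_integral b*(r-m)) {m..r}" using has_integral_const_real[of b m r] lm by (simp add: mult.commute)
    fix x assume "x \<in> {m..r} - {m}"
    hence "x > p" unfolding m_def by auto
    thus "g x = b" by (rule gb)
  qed simp
  have "(g has_integral (a*(m-l) + b*(r-m))) {l..r}"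
    by (rule has_integral_combine[OF lm h1 h2])
  thus ?thesis unfolding m_def by (rule integral_unique)
qed

lemma cell_P:
  fixes g :: "real \<Rightarrow> real"
  assumes dx: "dx > 0" and ga: "\<And>x. x < p \<Longrightarrow> g x = a" and gb: "\<And>x. x > p \<Longrightarrow> g x = b"
  shows "cell_avg dx g j = P a b (p/dx) j"
proof -
  define l where "l = (real_of_int j - 1/2)*dx"
  define r where "r = (real_of_int j + 1/2)*dx"
  have rl: "r = l + dx" unfolding l_def r_def by (simp add: algebra_simps)
  have lr: "l \<le> r" using rl dx by simp
  define m where "m = max l (min p r)"
  have I: "integral {l..r} g = a*(m - l) + b*(r - m)" unfolding m_def by (rule integral_step[OF lr ga gb])
  have arg: "p/dx - real_of_int j + 1/2 = (p - l)/dx" unfolding l_def using dx by (simp add: field_simps)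
  have ph: "m - l = dx * phi ((p-l)/dx)"
  proof -
    consider "p \<le> l" | "l \<le> p" "p \<le> r" | "r \<le> p" by linarith
    then show ?thesis
    proof cases
      case 1
      hence "(p-l)/dx \<le> 0" using dx by (simp add: divide_le_0_iff)
      thus ?thesis unfolding m_def using 1 lr by (simp add: phi_neg)
    next
      case 2
      hence "(p-l)/dx \<le> 1" "0 \<le> (p-l)/dx" using dx rl by (auto simp: divide_le_eq)
      thus ?thesis unfolding m_def using 2 dx by (simp add: phi_mid)
    next
      case 3
      hence "(p-l)/dx \<ge> 1" using dx rl by (simp add: le_divide_eq)
      thus ?thesis unfolding m_def using 3 lr rl by (simp add: phi_one)
    qed
  qed
  have "cell_avg dx g j = (1/dx) * integral {l..r} g"
    unfolding cell_avg_def l_def r_def ..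
  also have "\<dots> = (1/dx) * (a*(m - l) + b*(r - m))" unfolding I ..
  also have "\<dots> = (1/dx) * (a*(m - l) + b*(dx - (m - l)))" using rl by (simp add: algebra_simps)
  also have "\<dots> = P a b (p/dx) j" unfolding P_def arg ph using dx by (simp add: field_simps)
  finally show ?thesis .
qed

theorem mainTheorem4:
  fixes u dt dx \<nu> a b x0 :: real
    and cini :: "real \<Rightarrow> real"
    and c :: "nat \<Rightarrow> int \<Rightarrow> real"
  assumes "u > 0" and "dt > 0" and "dx > 0"
    and "\<nu> = u * dt / dx" and "0 < \<nu>" and "\<nu> \<le> 1"
    and "\<And>x. x < x0 \<Longrightarrow> cini x = a"
    and "\<And>x. x > x0 \<Longrightarrow> cini x = b"
    and "\<And>j. c 0 j = cell_avg dx cini j"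
    and "\<And>n j. c (Suc n) j = ld_step \<nu> (c n) j"
  shows "\<forall>n j. c n j = cell_avg dx (\<lambda>x. cini (x - u * real n * dt)) j"
proof (intro allI)
  fix n j
  have ca: "cell_avg dx (\<lambda>x. cini (x - u * real n * dt)) j = P a b ((x0 + u * real n * dt)/dx) j"
    for n j
    by (rule cell_P[OF assms(3)]) (auto intro: assms(7,8))
  have q: "(x0 + u * real n * dt)/dx = x0/dx + real n * \<nu>" for n
    using assms(3,4) by (simp add: field_simps)
  have "c n = P a b (x0/dx + real n * \<nu>)"
  proof (induction n)
    case 0
    show ?case using assms(9) ca[of 0] q[of 0] by auto
  next
    case (Suc n)
    have "c (Suc n) j = P a b (x0/dx + real (Suc n) * \<nu>) j" for j
      using assms(10) Suc step_P[OF assms(5,6)] by (simp add: algebra_simps)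
    thus ?case by auto
  qed
  thus "c n j = cell_avg dx (\<lambda>x. cini (x - u * real n * dt)) j" using ca q by simp
qed

end
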